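(* Assume $\varphi'(t) > 0$ for all $t \in [-1,1]$ and that the graph defined by the weights $w_{ij} \geq 0$ is connected. Let $X \in \mathcal{M}$ be a critical point of $f$ at which the Riemannian Hessian is negative semidefinite. If there exists a nonzero $v \in \mathbb{R}^d$ with $X^\top v \geq 0$ entrywise (i.e., $x_1,\dots,x_n$ lie in a common closed hemisphere), then $X$ is a global maximum of $f$ (equivalently $x_1 = \cdots = x_n$). Such a vector $v$ exists whenever $\mathrm{rank}(X) < d$.
   Context: $d\geq 2$, $\mathcal{M} = (\mathbb{S}^{d-1})^n$ is the set of $X \in \mathbb{R}^{d\times n}$ with unit-norm columns $x_1,\dots,x_n$, a Riemannian submanifold of $\mathbb{R}^{d\times n}$ with the Frobenius metric. $\varphi:[-1,1]\to\mathbb{R}$ is twice continuously differentiable, $W$ is symmetric with $w_{ij}\ge0$, the graph has edge $\{i,j\}$ iff $w_{ij}>0$, and $f(X) = \frac12\sum_{i,j} w_{ij}\varphi(x_i^\top x_j)$. Gradient and Hessian are Riemannian. *)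

theory Defs
  imports "HOL-Analysis.Analysis"
begin

text \<open>Points X of R^(d x n) are matrices of type real^'n^'d (d rows, n columns);
  the i-th column x_i is column i X.  The ambient space carries the Frobenius
  inner product, which is the inner product of the type real^'n^'d.\<close>

definition sphere_prod :: "(real^'n^'d) set" where
  "sphere_prod = {X. \<forall>i. norm (column i X) = 1}"

definition tangent_space :: "real^'n^'d \<Rightarrow> (real^'n^'d) set" where
  "tangent_space X = {V. \<forall>i. column i X \<bullet> column i V = 0}"

text \<open>Orthogonal projection onto the tangent space at X:
  Proj_X(Z) = Z - X ddiag(X^T Z) (formula taken for arbitrary X in the ambient space,
  giving a smooth extension of the projector).\<close>
definition proj_tan :: "real^'n^'d \<Rightarrow> real^'n^'d \<Rightarrow> real^'n^'d" where
  "proj_tan X Z = (\<chi> k i. Z $ k $ i - (column i X \<bullet> column i Z) * X $ k $ i)"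

definition egrad :: "(real^'n^'d \<Rightarrow> real) \<Rightarrow> real^'n^'d \<Rightarrow> real^'n^'d" where
  "egrad g X = (THE G. (g has_derivative (\<lambda>H. G \<bullet> H)) (at X))"

definition rgrad :: "(real^'n^'d \<Rightarrow> real) \<Rightarrow> real^'n^'d \<Rightarrow> real^'n^'d" where
  "rgrad g X = proj_tan X (egrad g X)"

definition rhess :: "(real^'n^'d \<Rightarrow> real) \<Rightarrow> real^'n^'d \<Rightarrow> real^'n^'d \<Rightarrow> real^'n^'d" where
  "rhess g X V = proj_tan X (frechet_derivative (\<lambda>Y. proj_tan Y (egrad g Y)) (at X) V)"

definition objf :: "(real \<Rightarrow> real) \<Rightarrow> real^'n^'n \<Rightarrow> real^'n^'d \<Rightarrow> real" where
  "objf \<phi> W X = (1/2) * (\<Sum>i\<in>UNIV. \<Sum>j\<in>UNIV. W $ i $ j * \<phi> (column i X \<bullet> column j X))"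

definition weight_graph_connected :: "real^'n^'n \<Rightarrow> bool" where
  "weight_graph_connected W \<longleftrightarrow> (\<forall>i j. (\<lambda>a b. W $ a $ b > 0)\<^sup>*\<^sup>* i j)"

end

theory Submission
  imports Defs
begin

lemma frob: "(A::real^'n^'d) \<bullet> B = (\<Sum>i\<in>UNIV. column i A \<bullet> column i B)"
  by (simp add: inner_vec_def column_def sum.swap[of _ "UNIV::'d set"])

lemma column_linear: "bounded_linear (\<lambda>Y::real^'n^'d. column i Y)"
proof -
  have "linear (\<lambda>Y::real^'n^'d. column i Y)"
    by (rule linearI) (auto simp: column_def vec_eq_iff)
  thus ?thesis by (simp add: linear_conv_bounded_linear)
qed

lemma column_deriv: "((\<lambda>Y::real^'n^'d. column i Y) has_derivative (\<lambda>H. column i H)) F"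
  using bounded_linear_imp_has_derivative[OF column_linear] .

lemma column_proj: "column i (proj_tan Y Z) = column i Z - (column i Y \<bullet> column i Z) *\<^sub>R column i Y"
  by (simp add: proj_tan_def column_def vec_eq_iff)

definition G :: "(real\<Rightarrow>real) \<Rightarrow> real^'n^'n \<Rightarrow> real^'n^'d \<Rightarrow> real^'n^'d" where
  "G \<psi> W Y = (\<chi> k i. \<Sum>j\<in>UNIV. W$i$j * \<psi> (column i Y \<bullet> column j Y) * Y$k$j)"

lemma column_G: "column i (G \<psi> W Y) = (\<Sum>j\<in>UNIV. (W$i$j * \<psi> (column i Y \<bullet> column j Y)) *\<^sub>R column j Y)"
  by (simp add: G_def column_def vec_eq_iff)

lemma XTv: "(transpose X *v v) $ i = column i X \<bullet> v"
  by (simp add: matrix_vector_mult_def transpose_def column_def inner_vec_def mult.commute)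

lemma chain_phi:
  assumes "\<And>t. (\<phi> has_real_derivative \<phi>' t) (at t)"
    and "(g has_derivative g') (at x within s)"
  shows "((\<lambda>x. \<phi> (g x)) has_derivative (\<lambda>h. \<phi>' (g x) * g' h)) (at x within s)"
  using has_derivative_compose[OF assms(2), of \<phi> "\<lambda>h. \<phi>' (g x) * h"] assms(1)
  by (simp add: has_field_derivative_def)

lemma objf_deriv:
  assumes d1: "\<And>t. (\<phi> has_real_derivative \<phi>' t) (at t)"
  shows "(objf \<phi> W has_derivative (\<lambda>H. (1/2) * (\<Sum>i\<in>UNIV. \<Sum>j\<in>UNIV. W$i$j * (\<phi>' (column i Y \<bullet> column j Y) *
      (column i Y \<bullet> column j H + column i H \<bullet> column j Y))))) (at Y)"
proof -
  have c: "((\<lambda>x. \<phi> (column i x \<bullet> column j x)) has_derivative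
     (\<lambda>h. \<phi>' (column i Y \<bullet> column j Y) * (column i Y \<bullet> column j h + column i h \<bullet> column j Y))) (at Y)" for i j
    by (rule chain_phi[OF d1], rule has_derivative_inner[OF column_deriv column_deriv])
  show ?thesis unfolding objf_def[abs_def]
    by (intro derivative_eq_intros c) (auto intro: c)
qed

lemma Wsym_entry: "transpose W = W \<Longrightarrow> W$j$i = W$i$j"
  using arg_cong[of _ _ "\<lambda>M. M$i$j"] by (metis transpose_def vec_lambda_beta)

lemma objf_grad_eq:
  assumes Wsym: "transpose W = W"
  shows "(1/2) * (\<Sum>i\<in>UNIV. \<Sum>j\<in>UNIV. W$i$j * (\<phi>' (column i Y \<bullet> column j Y) *
      (column i Y \<bullet> column j H + column i H \<bullet> column j Y))) = G \<phi>' W Y \<bullet> (H::real^'n^'d)"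
proof -
  let ?a = "\<lambda>i j. W$i$j * \<phi>' (column i Y \<bullet> column j Y)"
  have e1: "(\<Sum>i\<in>UNIV. \<Sum>j\<in>UNIV. ?a i j * (column i Y \<bullet> column j H))
      = (\<Sum>i\<in>UNIV. \<Sum>j\<in>UNIV. ?a i j * (column j Y \<bullet> column i H))"
    apply (subst sum.swap)
    using Wsym_entry[OF Wsym] by (simp add: inner_commute)
  have e2: "(\<Sum>i\<in>UNIV. \<Sum>j\<in>UNIV. ?a i j * (column i H \<bullet> column j Y))
      = (\<Sum>i\<in>UNIV. \<Sum>j\<in>UNIV. ?a i j * (column j Y \<bullet> column i H))"
    by (simp add: inner_commute)
  have "G \<phi>' W Y \<bullet> H = (\<Sum>i\<in>UNIV. \<Sum>j\<in>UNIV. ?a i j * (column j Y \<bullet> column i H))"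
    by (simp add: frob column_G inner_sum_left)
  moreover have "(1/2) * (\<Sum>i\<in>UNIV. \<Sum>j\<in>UNIV. W$i$j * (\<phi>' (column i Y \<bullet> column j Y) *
      (column i Y \<bullet> column j H + column i H \<bullet> column j Y)))
     = (1/2) * ((\<Sum>i\<in>UNIV. \<Sum>j\<in>UNIV. ?a i j * (column i Y \<bullet> column j H))
         + (\<Sum>i\<in>UNIV. \<Sum>j\<in>UNIV. ?a i j * (column i H \<bullet> column j Y)))"
    by (simp add: sum.distrib algebra_simps)
  ultimately show ?thesis using e1 e2 by simp
qed

lemma egrad_eq:
  assumes d1: "\<And>t. (\<phi> has_real_derivative \<phi>' t) (at t)" and Wsym: "transpose W = W"
  shows "egrad (objf \<phi> W) Y = G \<phi>' W (Y::real^'n^'d)"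
proof -
  have D: "(objf \<phi> W has_derivative (\<lambda>H. G \<phi>' W Y \<bullet> H)) (at Y)"
  proof -
    have "(\<lambda>H. (1/2) * (\<Sum>i\<in>UNIV. \<Sum>j\<in>UNIV. W$i$j * (\<phi>' (column i Y \<bullet> column j Y) *
      (column i Y \<bullet> column j H + column i H \<bullet> column j Y)))) = (\<lambda>H. G \<phi>' W Y \<bullet> H)"
      by (rule ext, rule objf_grad_eq[OF Wsym])
    thus ?thesis using objf_deriv[OF d1, of W Y] by simp
  qed
  show ?thesis unfolding egrad_def
  proof (rule the_equality)
    fix G' assume "(objf \<phi> W has_derivative (\<lambda>H. G' \<bullet> H)) (at Y)"
    from has_derivative_unique[OF this D] have "\<And>H. G' \<bullet> H = G \<phi>' W Y \<bullet> H" by metis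
    from this[of "G' - G \<phi>' W Y"] have "(G' - G \<phi>' W Y) \<bullet> (G' - G \<phi>' W Y) = 0"
      by (simp only: inner_diff_left)
    thus "G' = G \<phi>' W Y" by simp
  qed (rule D)
qed

lemma entry_deriv: "((\<lambda>Y::real^'n^'d. Y$k$i) has_derivative (\<lambda>H. H$k$i)) F"
  by (rule bounded_linear_imp_has_derivative,
      rule bounded_linear_compose[OF bounded_linear_vec_nth bounded_linear_vec_nth])

lemma entry_diff: "(\<lambda>Y::real^'n^'d. Y$k$i) differentiable F"
  using entry_deriv differentiableI by blast

lemma F_diff:
  assumes d2': "\<And>t. (\<phi>' has_real_derivative \<phi>'' t) (at t)"
  shows "(\<lambda>Y. proj_tan Y (G \<phi>' W Y)) differentiable (at (X::real^'n^'d))"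
proof -
  have pd: "\<phi>' differentiable (at t)" for t
    using d2' unfolding differentiable_def has_field_derivative_def by blast
  have ip: "(\<lambda>Y::real^'n^'d. column i Y \<bullet> column j Y) differentiable (at X)" for i j
    by (simp add: inner_vec_def column_def) (auto intro!: derivative_intros entry_diff)
  have Gd: "(\<lambda>Y. G \<phi>' W Y $ l $ i) differentiable (at X)" for l i
    unfolding G_def
    by simp (auto intro!: derivative_intros differentiable_compose[OF pd] ip entry_diff)
  show ?thesis
    apply (subst differentiable_componentwise_within)
    apply (clarsimp simp: Basis_vec_def inner_axis proj_tan_def)
    apply (simp add: inner_vec_def column_def)
    by (auto intro!: derivative_intros Gd entry_diff)
qed

lemma VF:
  fixes Y Z :: "real^'n^'d"
  assumes "\<And>i. column i V = v"
  shows "V \<bullet> proj_tan Y Z = (\<Sum>i\<in>UNIV. v \<bullet> column i Z - (column i Y \<bullet> column i Z) * (column i Y \<bullet> v))"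
  by (simp add: frob column_proj assms inner_diff_right inner_commute)

lemma chain_phi_field:
  assumes "\<And>t. (\<phi>' has_real_derivative \<phi>'' t) (at t)"
    and "(g has_real_derivative g') (at x)"
  shows "((\<lambda>x. \<phi>' (g x)) has_real_derivative (\<phi>'' (g x) * g')) (at x)"
  using DERIV_chain2[OF assms(1) assms(2)] .

lemma hess_value:
  fixes X :: "real^'n^'d" and v :: "real^'d"
  assumes d1: "\<And>t. (\<phi> has_real_derivative \<phi>' t) (at t)"
    and d2': "\<And>t. (\<phi>' has_real_derivative \<phi>'' t) (at t)"
    and Wsym: "transpose W = W"
    and orth: "\<And>i. column i X \<bullet> v = 0"
  shows "(\<chi> k i. v$k) \<bullet> rhess (objf \<phi> W) X (\<chi> k i. v$k) =
     (v \<bullet> v) * (\<Sum>i\<in>UNIV. \<Sum>j\<in>UNIV. W$i$j * \<phi>' (column i X \<bullet> column j X) * (1 - column i X \<bullet> column j X))"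
proof -
  define V :: "real^'n^'d" where "V = (\<chi> k i. v$k)"
  have cV: "column i V = v" for i by (simp add: V_def column_def vec_eq_iff)
  define F where "F = (\<lambda>Y::real^'n^'d. proj_tan Y (G \<phi>' W Y))"
  have Feq: "(\<lambda>Y. proj_tan Y (egrad (objf \<phi> W) Y)) = F"
    by (rule ext) (simp add: F_def egrad_eq[OF d1 Wsym])
  define F' where "F' = frechet_derivative F (at X)"
  have FD: "(F has_derivative F') (at X)"
    unfolding F'_def using F_diff[OF d2', of W X] frechet_derivative_works F_def by blast
  have lin: "linear F'" using FD has_derivative_linear by blast
  define c where "c = v \<bullet> v"
  define k where "k = (\<lambda>t. c * (\<Sum>i\<in>UNIV. \<Sum>j\<in>UNIV. W$i$j * \<phi>' (column i X \<bullet> column j X + t*t*c) *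
        (1 - (column i X \<bullet> column j X + t*t*c))))"
  have hk: "V \<bullet> F (X + t *\<^sub>R V) = t * k t" for t
  proof -
    let ?Y = "X + t *\<^sub>R V"
    have cY: "column i ?Y = column i X + t *\<^sub>R v" for i
    proof -
      have "column i ?Y = column i X + t *\<^sub>R column i V" by (simp add: column_def vec_eq_iff)
      thus ?thesis using cV by simp
    qed
    have tau: "column i ?Y \<bullet> column j ?Y = column i X \<bullet> column j X + t*t*c" for i j
      using orth[of i] orth[of j] by (simp add: cY c_def inner_add_left inner_add_right inner_commute)
    have yv: "column i ?Y \<bullet> v = t * c" for i
      using orth[of i] by (simp add: cY c_def inner_add_left)
    have "V \<bullet> F ?Y = (\<Sum>i\<in>UNIV. v \<bullet> column i (G \<phi>' W ?Y) - (column i ?Y \<bullet> column i (G \<phi>' W ?Y)) * (column i ?Y \<bullet> v))"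
      unfolding F_def by (rule VF[OF cV])
    also have "\<dots> = (\<Sum>i\<in>UNIV. \<Sum>j\<in>UNIV. W$i$j * \<phi>' (column i X \<bullet> column j X + t*t*c) * (t*c)
         - W$i$j * \<phi>' (column i X \<bullet> column j X + t*t*c) * (column i X \<bullet> column j X + t*t*c) * (t*c))"
      by (simp add: column_G inner_sum_left inner_sum_right tau yv inner_commute[of v]
            sum_distrib_right sum_subtractf)
    also have "\<dots> = t * k t"
      by (simp add: k_def sum_distrib_left sum_subtractf[symmetric] algebra_simps)
    finally show ?thesis .
  qed
  have h1: "((\<lambda>t. V \<bullet> F (X + t *\<^sub>R V)) has_real_derivative (V \<bullet> F' V)) (at 0)"
  proof -
    have l: "((\<lambda>t::real. X + t *\<^sub>R V) has_derivative (\<lambda>s. s *\<^sub>R V)) (at 0)"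
      by (intro derivative_eq_intros) auto
    have FD': "(F has_derivative F') (at (X + 0 *\<^sub>R V))" using FD by simp
    have "((\<lambda>t. F (X + t *\<^sub>R V)) has_derivative (\<lambda>s. F' (s *\<^sub>R V))) (at 0)"
      using has_derivative_compose[OF l FD'] .
    from bounded_linear.has_derivative[OF bounded_linear_inner_right[of V] this]
    have "((\<lambda>t. V \<bullet> F (X + t *\<^sub>R V)) has_derivative (\<lambda>s. V \<bullet> F' (s *\<^sub>R V))) (at 0)" .
    moreover have "(\<lambda>s. V \<bullet> F' (s *\<^sub>R V)) = (\<lambda>s. (V \<bullet> F' V) * s)"
      using linear_cmul[OF lin] by (auto simp: mult.commute)
    ultimately show ?thesis by (simp add: has_field_derivative_def)
  qed
  have h2: "((\<lambda>t. V \<bullet> F (X + t *\<^sub>R V)) has_real_derivative k 0) (at 0)"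
  proof -
    have pd: "\<phi>' differentiable (at t)" for t
      using d2' unfolding differentiable_def has_field_derivative_def by blast
    have "k differentiable (at 0)"
      unfolding k_def by (auto intro!: derivative_intros differentiable_compose[OF pd])
    then obtain Kd where Kd: "(k has_derivative Kd) (at 0)" unfolding differentiable_def by blast
    have "((\<lambda>t. t * k t) has_derivative (\<lambda>h. 0 * Kd h + h * k 0)) (at 0)"
      using has_derivative_mult[OF has_derivative_ident Kd] by simp
    moreover have "(\<lambda>h. 0 * Kd h + h * k 0) = (*) (k 0)" by (auto simp: mult.commute)
    ultimately have "((\<lambda>t. t * k t) has_real_derivative k 0) (at 0)"
      by (simp add: has_field_derivative_def)
    thus ?thesis by (simp add: hk)
  qed
  have "V \<bullet> F' V = k 0" using DERIV_unique[OF h1 h2] .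
  moreover have "V \<bullet> rhess (objf \<phi> W) X V = V \<bullet> F' V"
  proof -
    have "V \<bullet> rhess (objf \<phi> W) X V = V \<bullet> proj_tan X (F' V)"
      by (simp add: rhess_def Feq F'_def)
    also have "\<dots> = (\<Sum>i\<in>UNIV. v \<bullet> column i (F' V) - (column i X \<bullet> column i (F' V)) * (column i X \<bullet> v))"
      by (rule VF[OF cV])
    also have "\<dots> = V \<bullet> F' V"
      by (simp add: orth frob cV)
    finally show ?thesis .
  qed
  ultimately show ?thesis by (simp add: V_def k_def c_def)
qed

lemma conn_prop:
  assumes conn: "weight_graph_connected W"
    and step: "\<And>a b. W$a$b > 0 \<Longrightarrow> Q a \<Longrightarrow> Q b" and q: "Q i"
  shows "Q j"
proof -
  have "(\<lambda>a b. W $ a $ b > 0)\<^sup>*\<^sup>* i j" using conn by (simp add: weight_graph_connected_def)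
  thus ?thesis
    by (induction rule: rtranclp_induct) (auto intro: q step)
qed

lemma sum_nonneg_le0:
  fixes f :: "'a \<Rightarrow> real"
  assumes "finite S" "\<And>x. x \<in> S \<Longrightarrow> f x \<ge> 0" "sum f S \<le> 0" "x \<in> S"
  shows "f x = 0"
proof -
  have "sum f S = 0" using assms sum_nonneg[of S f] by force
  thus ?thesis using sum_nonneg_eq_0_iff[of S f] assms by blast
qed

theorem mainTheorem11:
  fixes \<phi> \<phi>' \<phi>'' :: "real \<Rightarrow> real"
    and W :: "real^'n^'n"
    and X :: "real^'n^'d"
  assumes d2: "CARD('d) \<ge> 2"
    and d1: "\<And>t. (\<phi> has_real_derivative \<phi>' t) (at t)"
    and d2': "\<And>t. (\<phi>' has_real_derivative \<phi>'' t) (at t)"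
    and c2: "continuous_on UNIV \<phi>''"
    and pos: "\<And>t. t \<in> {-1..1} \<Longrightarrow> \<phi>' t > 0"
    and Wsym: "transpose W = W"
    and Wnn: "\<And>i j. W $ i $ j \<ge> 0"
    and conn: "weight_graph_connected W"
    and XM: "X \<in> sphere_prod"
    and crit: "rgrad (objf \<phi> W) X = 0"
    and nsd: "\<And>V. V \<in> tangent_space X \<Longrightarrow> V \<bullet> rhess (objf \<phi> W) X V \<le> 0"
  shows "(\<forall>v::real^'d. v \<noteq> 0 \<and> (\<forall>i. (transpose X *v v) $ i \<ge> 0) \<longrightarrow>
            (\<forall>Y::real^'n^'d\<in>sphere_prod. objf \<phi> W Y \<le> objf \<phi> W X) \<and>
            (\<forall>i j. column i X = column j X))
       \<and> (rank X < CARD('d) \<longrightarrow>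
            (\<exists>v::real^'d. v \<noteq> 0 \<and> (\<forall>i. (transpose X *v v) $ i \<ge> 0)))"
proof (intro conjI allI impI)
  assume "rank X < CARD('d)"
  hence "rank (transpose X) \<noteq> CARD('d)" by (simp add: rank_transpose)
  then obtain v where "v \<noteq> 0" "transpose X *v v = 0"
    using matrix_nonfull_linear_equations_eq[of "transpose X"] by blast
  thus "\<exists>v::real^'d. v \<noteq> 0 \<and> (\<forall>i. (transpose X *v v) $ i \<ge> 0)" by auto
next
  fix v :: "real^'d"
  assume hv: "v \<noteq> 0 \<and> (\<forall>i. (transpose X *v v) $ i \<ge> 0)"
  define x where "x = (\<lambda>i. column i X)"
  define a where "a = (\<lambda>i. x i \<bullet> v)"
  have a0: "a i \<ge> 0" for i
  proof -
    have "(transpose X *v v) $ i \<ge> 0" using hv by blast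
    thus ?thesis by (simp only: XTv a_def x_def)
  qed
  have unit: "norm (x i) = 1" for i using XM by (simp add: sphere_prod_def x_def)
  have xx: "x i \<bullet> x i = 1" for i using unit[of i] by (simp add: power2_norm_eq_inner[symmetric])
  have tb: "\<bar>x i \<bullet> x j\<bar> \<le> 1" for i j
    using Cauchy_Schwarz_ineq2[of "x i" "x j"] unit by simp
  have t1: "x i \<bullet> x j \<le> 1" "-1 \<le> x i \<bullet> x j" for i j using tb[of i j] by auto
  have eq1: "x i = x j" if "x i \<bullet> x j = 1" for i j
  proof -
    have "(x i - x j) \<bullet> (x i - x j) = 0"
      using that xx[of i] xx[of j] by (simp add: inner_diff_left inner_diff_right inner_commute)
    thus ?thesis by simp
  qed
  define A where "A = (\<lambda>i j. W$i$j * \<phi>' (x i \<bullet> x j))"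
  have Ann: "A i j \<ge> 0" for i j
    using Wnn[of i j] pos[of "x i \<bullet> x j"] t1[of i j] by (simp add: A_def)
  have Apos: "A i j > 0" if "W$i$j > 0" for i j
    using that pos[of "x i \<bullet> x j"] t1[of i j] by (simp add: A_def)
  have omt: "1 - x i \<bullet> x j \<ge> 0" for i j using t1[of i j] by simp
  have gcol: "column i (G \<phi>' W X) = (\<Sum>j\<in>UNIV. A i j *\<^sub>R x j)" for i
    by (simp add: column_G A_def x_def)
  have critc: "(\<Sum>j\<in>UNIV. A i j *\<^sub>R x j) = (\<Sum>j\<in>UNIV. A i j * (x i \<bullet> x j)) *\<^sub>R x i" for i
  proof -
    have "column i (proj_tan X (G \<phi>' W X)) = 0"
      using crit by (simp add: rgrad_def egrad_eq[OF d1 Wsym] column_def vec_eq_iff)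
    hence "(\<Sum>j\<in>UNIV. A i j *\<^sub>R x j) = (x i \<bullet> (\<Sum>j\<in>UNIV. A i j *\<^sub>R x j)) *\<^sub>R x i"
      by (simp add: column_proj gcol x_def)
    thus ?thesis by (simp add: inner_sum_right)
  qed
  have dv: "(\<Sum>j\<in>UNIV. A i j * a j) = (\<Sum>j\<in>UNIV. A i j * (x i \<bullet> x j)) * a i" for i
    using arg_cong[OF critc[of i], of "\<lambda>z. z \<bullet> v"] by (simp add: inner_sum_left a_def)
  have defect: "x l = x j" if "(\<Sum>l\<in>UNIV. A j l * (1 - x j \<bullet> x l)) \<le> 0" "W$j$l > 0" for j l
  proof -
    have "A j l * (1 - x j \<bullet> x l) = 0"
      by (rule sum_nonneg_le0[OF _ _ that(1)]) (auto intro: mult_nonneg_nonneg Ann omt)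
    hence "x j \<bullet> x l = 1" using Apos[OF that(2)] by simp
    thus ?thesis using eq1 by metis
  qed
  have alleq: "\<forall>i j. x i = x j"
  proof (cases "\<exists>k. a k = 0")
    case True
    then obtain k where k: "a k = 0" by blast
    have az: "a j = 0" for j
    proof (rule conn_prop[OF conn, of "\<lambda>j. a j = 0", OF _ k])
      fix p q assume pq: "W$p$q > 0" "a p = 0"
      have "(\<Sum>j\<in>UNIV. A p j * a j) = 0" using dv[of p] pq(2) by simp
      hence "A p q * a q = 0"
        using sum_nonneg_le0[of UNIV "\<lambda>j. A p j * a j" q] Ann a0 by simp
      thus "a q = 0" using Apos[OF pq(1)] by simp
    qed
    define V :: "real^'n^'d" where "V = (\<chi> k i. v$k)"
    have cV: "column i V = v" for i by (simp add: V_def column_def vec_eq_iff)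
    have orth: "column i X \<bullet> v = 0" for i using az[of i] by (simp add: a_def x_def)
    have "V \<in> tangent_space X" by (simp add: tangent_space_def cV orth)
    from nsd[OF this] hess_value[OF d1 d2' Wsym orth]
    have "(v \<bullet> v) * (\<Sum>i\<in>UNIV. \<Sum>j\<in>UNIV. A i j * (1 - x i \<bullet> x j)) \<le> 0"
      by (simp add: V_def A_def x_def)
    moreover have "v \<bullet> v > 0" using hv by simp
    ultimately have tot: "(\<Sum>i\<in>UNIV. \<Sum>j\<in>UNIV. A i j * (1 - x i \<bullet> x j)) \<le> 0"
      by (simp add: mult_le_0_iff)
    have rows: "(\<Sum>j\<in>UNIV. A i j * (1 - x i \<bullet> x j)) \<le> 0" for i
    proof -
      have "(\<Sum>j\<in>UNIV. A i j * (1 - x i \<bullet> x j)) = 0"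
        by (rule sum_nonneg_le0[OF _ _ tot]) (auto intro!: sum_nonneg mult_nonneg_nonneg Ann omt)
      thus ?thesis by simp
    qed
    show ?thesis
    proof (intro allI)
      fix i j
      have "x j = x i" by (rule conn_prop[OF conn, of "\<lambda>j. x j = x i"]) (use defect rows in auto)
      thus "x i = x j" by simp
    qed
  next
    case False
    hence apos: "a j > 0" for j using a0[of j] by (metis less_eq_real_def)
    define m where "m = Min (range a)"
    have "m \<in> range a" unfolding m_def by (rule Min_in) auto
    then obtain k where k: "a k = m" by auto
    have mle: "m \<le> a j" for j unfolding m_def by (rule Min_le) auto
    have mpos: "m > 0" using apos k by metis
    have step: "a q = m \<and> x q = x k" if pq: "W$p$q > 0" "a p = m \<and> x p = x k" for p q
    proof -
      have "(\<Sum>j\<in>UNIV. A p j * m) \<le> (\<Sum>j\<in>UNIV. A p j * a j)"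
        by (rule sum_mono) (use Ann mle in \<open>auto intro: mult_left_mono\<close>)
      also have "\<dots> = (\<Sum>j\<in>UNIV. A p j * (x p \<bullet> x j)) * m" using dv[of p] pq(2) by simp
      finally have "m * (\<Sum>j\<in>UNIV. A p j) \<le> m * (\<Sum>j\<in>UNIV. A p j * (x p \<bullet> x j))"
        by (simp add: sum_distrib_right sum_distrib_left mult.commute)
      hence "(\<Sum>j\<in>UNIV. A p j) \<le> (\<Sum>j\<in>UNIV. A p j * (x p \<bullet> x j))"
        using mpos by simp
      hence "(\<Sum>j\<in>UNIV. A p j * (1 - x p \<bullet> x j)) \<le> 0"
        by (simp add: right_diff_distrib sum_subtractf)
      from defect[OF this pq(1)] have "x q = x p" .
      thus ?thesis using pq(2) unfolding a_def by metis
    qed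
    show ?thesis
    proof (intro allI)
      fix i j
      have "a i = m \<and> x i = x k" by (rule conn_prop[OF conn, of "\<lambda>j. a j = m \<and> x j = x k", OF step]) (use k in auto)
      moreover have "a j = m \<and> x j = x k" by (rule conn_prop[OF conn, of "\<lambda>j. a j = m \<and> x j = x k", OF step]) (use k in auto)
      ultimately show "x i = x j" by simp
    qed
  qed
  show "column i X = column j X" for i j using alleq by (simp add: x_def)
  have mono: "\<phi> s \<le> \<phi> 1" if "-1 \<le> s" "s \<le> 1" for s
    by (rule DERIV_nonneg_imp_nondecreasing[OF that(2)])
       (use d1 pos that in \<open>auto intro!: exI less_imp_le\<close>)
  show "\<forall>Y::real^'n^'d\<in>sphere_prod. objf \<phi> W Y \<le> objf \<phi> W X"
  proof
    fix Y :: "real^'n^'d" assume Y: "Y \<in> sphere_prod"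
    have ab: "\<bar>column i Y \<bullet> column j Y\<bar> \<le> 1" for i j
      using Cauchy_Schwarz_ineq2[of "column i Y" "column j Y"] Y by (simp add: sphere_prod_def)
    have "\<phi> (column i Y \<bullet> column j Y) \<le> \<phi> (column i X \<bullet> column j X)" for i j
    proof -
      have e: "column i X \<bullet> column j X = 1" using alleq xx[of i] unfolding x_def by metis
      show ?thesis using mono[of "column i Y \<bullet> column j Y"] e ab[of i j] by (auto simp: abs_le_iff)
    qed
    thus "objf \<phi> W Y \<le> objf \<phi> W X"
      unfolding objf_def
      by (intro mult_left_mono sum_mono) (auto intro: mult_left_mono Wnn)
  qed
qed

end
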